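(* Let $p$ be a prime, let $P > 1$ be a finite abelian $p$-group, and let $G$ be a finite $p'$-group acting faithfully on $P$ via automorphisms. Let $a$ be an integer with $1 \le a \le \log_p(\exp(P))$ and let $\Gamma$ be the set of elements of order $p^a$ in $P$. Then the number $n(G,\Gamma)$ of orbits of $G$ on $\Gamma$ satisfies $n(G,\Gamma) \ge p^{a-1}$.
   Context: A $p'$-group is a finite group whose order is not divisible by $p$. $\exp(P)$ denotes the exponent of $P$. *)

theory Defs
  imports "HOL-Algebra.Algebra" Complex_Main
begin

definition group_exp :: "('a, 'b) monoid_scheme \<Rightarrow> nat" where
  "group_exp G = (LEAST n. 0 < n \<and> (\<forall>x\<in>carrier G. x [^]\<^bsub>G\<^esub> n = \<one>\<^bsub>G\<^esub>))"

end

theory Submission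
  imports Defs "HOL-Number_Theory.Cong"
begin

lemma binom_aux:
  fixes c :: int
  shows "c^2 dvd (1 + c)^m - 1 - int m * c"
proof (induction m)
  case 0
  then show ?case by simp
next
  case (Suc m)
  have "(1 + c)^Suc m - 1 - int (Suc m) * c = (1 + c) * ((1 + c)^m - 1 - int m * c) + int m * c^2"
    by (simp add: algebra_simps power2_eq_square)
  moreover have "c^2 dvd (1 + c) * ((1 + c)^m - 1 - int m * c)"
    using Suc.IH by (rule dvd_mult)
  moreover have "c^2 dvd int m * c^2" by simp
  ultimately show ?case by (metis dvd_add)
qed

lemma keyA:
  fixes p m a :: nat and k :: int
  assumes pr: "Factorial_Ring.prime p" and nm: "\<not> p dvd m" and k1: "int p dvd k - 1"
    and km: "int p ^ a dvd k^m - 1" and a1: "a \<ge> 1"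
  shows "int p ^ a dvd k - 1"
  using km a1
proof (induction a)
  case 0
  then show ?case by simp
next
  case (Suc a)
  show ?case
  proof (cases "a = 0")
    case True
    then show ?thesis using k1 by simp
  next
    case False
    have "int p ^ a dvd k^m - 1"
      using Suc.prems(1) by (meson dvd_trans le_imp_power_dvd le_SucI order_refl)
    then have "int p ^ a dvd k - 1" using Suc.IH False by simp
    then obtain t where t: "k - 1 = int p ^ a * t" by blast
    define c where "c = int p ^ a * t"
    have kc: "k = 1 + c" using t c_def by simp
    have "c^2 = int p ^ (2*a) * t^2"
      unfolding c_def by (simp add: power_mult_distrib power_mult[symmetric] mult.commute)
    moreover have "int p ^ Suc a dvd int p ^ (2*a)"
      using False by (intro le_imp_power_dvd) simp
    ultimately have "int p ^ Suc a dvd c^2" by simp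
    then have d1: "int p ^ Suc a dvd c^2" .
    have "int p ^ Suc a dvd (1 + c)^m - 1 - int m * c"
      using d1 binom_aux dvd_trans by blast
    moreover have "int p ^ Suc a dvd (1 + c)^m - 1" using Suc.prems(1) kc by simp
    moreover have "int m * c = ((1 + c)^m - 1) - ((1 + c)^m - 1 - int m * c)" by simp
    ultimately have "int p ^ Suc a dvd int m * c"
      by (metis dvd_diff)
    then have "int p ^ a * int p dvd int p ^ a * (int m * t)"
      unfolding c_def by (simp add: algebra_simps)
    then have "int p dvd int m * t"
      using pr by (subst (asm) dvd_mult_cancel_left) (auto simp: prime_gt_0_nat)
    moreover have "Factorial_Ring.prime (int p)" using pr by simp
    ultimately have "int p dvd t" using nm
      by (metis int_dvd_int_iff prime_dvd_mult_iff)
    then obtain s where "t = int p * s" by blast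
    then show ?thesis using t by simp
  qed
qed

lemma pow_cong_eq:
  fixes P (structure)
  assumes "group P" "x \<in> carrier P" "[i = j] (mod group.ord P x)"
  shows "x [^]\<^bsub>P\<^esub> (i::nat) = x [^]\<^bsub>P\<^esub> (j::nat)"
proof -
  interpret group P by fact
  have "[int i = int j] (mod int (ord x))" using assms(3) by (simp add: cong_int_iff)
  then have "int (ord x) dvd int j - int i" by (metis cong_iff_dvd_diff cong_sym)
  then have "x [^] (int i) = x [^] (int j)" using int_pow_eq assms(2) by blast
  then show ?thesis by (simp add: int_pow_int)
qed

lemma pow_eq_cong:
  fixes P (structure)
  assumes "group P" "x \<in> carrier P" "x [^]\<^bsub>P\<^esub> (i::nat) = x [^]\<^bsub>P\<^esub> (j::nat)"
  shows "[i = j] (mod group.ord P x)"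
proof -
  interpret group P by fact
  have "x [^] (int i) = x [^] (int j)" using assms(3) by (simp add: int_pow_int)
  then have "int (ord x) dvd int j - int i" using int_pow_eq assms(2) by blast
  then have "[int i = int j] (mod int (ord x))" by (metis cong_iff_dvd_diff cong_sym)
  then show ?thesis by (simp add: cong_int_iff)
qed

theorem theorem2p4:
  fixes p :: nat and a :: nat
    and P :: "('a, 'c) monoid_scheme" and G :: "('g, 'd) monoid_scheme"
    and \<phi> :: "'g \<Rightarrow> 'a \<Rightarrow> 'a"
  assumes "Factorial_Ring.prime p"
    and "comm_group P" and "finite (carrier P)"
    and "\<exists>k. order P = p ^ k"
    and "carrier P \<noteq> {\<one>\<^bsub>P\<^esub>}"
    and "group G" and "finite (carrier G)" and "\<not> p dvd order G"
    and "group_action G (carrier P) \<phi>"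
    and "\<forall>g\<in>carrier G. \<phi> g \<in> hom P P"
    and "\<forall>g\<in>carrier G. (\<forall>x\<in>carrier P. \<phi> g x = x) \<longrightarrow> g = \<one>\<^bsub>G\<^esub>"
    and "1 \<le> a" and "real a \<le> log (real p) (real (group_exp P))"
  shows "card (orbits G {x \<in> carrier P. group.ord P x = p ^ a} \<phi>) \<ge> p ^ (a - 1)"
proof -
  interpret P: comm_group P by fact
  interpret G: group G by fact
  interpret A: group_action G "carrier P" \<phi> by fact
  have pr: "Factorial_Ring.prime p" by fact
  have p1: "p > 1" using prime_gt_1_nat pr by blast
  have a1: "a \<ge> 1" by fact
  obtain K where K: "order P = p ^ K" using assms(4) by blast
  have ordpow: "\<exists>j. P.ord z = p ^ j" if "z \<in> carrier P" for z
  proof -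
    have "P.ord z dvd p ^ K" using P.ord_dvd_group_order[OF that] K by simp
    then show ?thesis using pr by (auto simp: divides_primepow_nat)
  qed
  define M where "M = Max (P.ord ` carrier P)"
  have "M \<in> P.ord ` carrier P" unfolding M_def using assms(3) by (intro Max_in) auto
  then obtain z where z: "z \<in> carrier P" "P.ord z = M" by auto
  obtain c where c0: "P.ord z = p ^ c" using ordpow[OF z(1)] by blast
  have c: "M = p ^ c" using trans[OF z(2)[symmetric] c0] .
  have allpow: "w [^]\<^bsub>P\<^esub> M = \<one>\<^bsub>P\<^esub>" if hw: "w \<in> carrier P" for w
  proof -
    obtain j where j: "P.ord w = p ^ j" using ordpow[OF hw] by blast
    have "P.ord w \<le> M" unfolding M_def by (rule Max_ge[OF finite_imageI[OF assms(3)] imageI[OF hw]])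
    then have "p ^ j \<le> p ^ c" using j c by simp
    then have "j \<le> c" by (rule power_le_imp_le_exp[OF p1])
    then have "P.ord w dvd M" using j c by (simp add: le_imp_power_dvd)
    then show ?thesis using hw P.pow_eq_id by blast
  qed
  have Mpos: "M > 0" using c p1 by simp
  have exM: "0 < M \<and> (\<forall>x\<in>carrier P. x [^]\<^bsub>P\<^esub> M = \<one>\<^bsub>P\<^esub>)"
    using Mpos allpow by simp
  have ex: "\<exists>n::nat. 0 < n \<and> (\<forall>x\<in>carrier P. x [^]\<^bsub>P\<^esub> n = \<one>\<^bsub>P\<^esub>)"
    using exM by (rule exI)
  have e_le: "group_exp P \<le> M" unfolding group_exp_def using exM by (rule Least_le)
  have e_pos: "group_exp P > 0" unfolding group_exp_def using LeastI_ex[OF ex] by (rule conjunct1)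
  have "real a \<le> log (real p) (real (group_exp P))" by fact
  also have "\<dots> \<le> log (real p) (real M)" using e_le e_pos p1 by (subst log_le_cancel_iff) auto
  also have "\<dots> = real c" using c p1 by (simp add: log_nat_power)
  finally have ac: "a \<le> c" by simp
  define x where "x = z [^]\<^bsub>P\<^esub> (p ^ (c - a))"
  have xc: "x \<in> carrier P" unfolding x_def using z by simp
  have ordx: "P.ord x = p ^ a"
  proof -
    have "p ^ (c - a) dvd P.ord z" using z c ac by (simp add: le_imp_power_dvd)
    then have "P.ord x = p ^ c div p ^ (c - a)" unfolding x_def using z c p1 by (subst P.ord_pow) auto
    also have "p ^ c = p ^ (c - a) * p ^ a" using ac by (simp add: power_add[symmetric])
    finally show ?thesis using p1 by simp
  qed
  have one_act: "\<phi> \<one>\<^bsub>G\<^esub> y = y" if "y \<in> carrier P" for y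
    using A.id_eq_one that by (metis restrict_apply')
  have iter: "\<phi> (g [^]\<^bsub>G\<^esub> n) y = y [^]\<^bsub>P\<^esub> (k ^ n)"
    if "g \<in> carrier G" "y \<in> carrier P" "\<phi> g y = y [^]\<^bsub>P\<^esub> k" for g y and k n :: nat
  proof (induction n)
    case 0
    then show ?case using one_act that(2) by simp
  next
    case (Suc n)
    have gn: "g [^]\<^bsub>G\<^esub> n \<in> carrier G" using that by simp
    have "\<phi> (g [^]\<^bsub>G\<^esub> Suc n) y = \<phi> (g [^]\<^bsub>G\<^esub> n) (\<phi> g y)"
      using that gn by (simp add: A.composition_rule)
    also have "\<dots> = (\<phi> (g [^]\<^bsub>G\<^esub> n) y) [^]\<^bsub>P\<^esub> k"
      using that gn assms(10) by (simp add: hom_nat_pow[OF _ _ P.is_group P.is_group])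
    also have "\<dots> = y [^]\<^bsub>P\<^esub> (k ^ Suc n)" using Suc.IH that by (simp add: P.nat_pow_pow mult.commute)
    finally show ?case .
  qed
  have key: "[k = 1] (mod p ^ a)"
    if "g \<in> carrier G" "y \<in> carrier P" "P.ord y = p ^ a" "\<phi> g y = y [^]\<^bsub>P\<^esub> k" "[k = 1] (mod p)" for g y and k :: nat
  proof -
    define n where "n = G.ord g"
    have "g [^]\<^bsub>G\<^esub> n = \<one>\<^bsub>G\<^esub>" using that(1) n_def by simp
    then have "y [^]\<^bsub>P\<^esub> (k ^ n) = y [^]\<^bsub>P\<^esub> (1::nat)"
      using iter[OF that(1,2,4), of n] one_act[OF that(2)] that(2) by simp
    then have c1: "[k ^ n = 1] (mod p ^ a)" using pow_eq_cong[OF P.is_group that(2)] that(3) by metis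
    have "n dvd order G" using G.ord_dvd_group_order that(1) n_def by blast
    then have nd: "\<not> p dvd n" using assms(8) dvd_trans by blast
    have k1: "k \<ge> 1"
    proof (rule ccontr)
      assume "\<not> 1 \<le> k"
      then have "k = 0" by simp
      then have "0 mod p = 1 mod p" using that(5) unfolding cong_def by simp
      then show False using p1 by simp
    qed
    have kn1: "k ^ n \<ge> 1" using k1 by simp
    have "p dvd k - 1" using that(5) by (rule cong_to_1_nat)
    then have d1: "int p dvd int k - 1" using k1 by (metis int_dvd_int_iff of_nat_1 of_nat_diff)
    have "p ^ a dvd k ^ n - 1" using c1 by (rule cong_to_1_nat)
    then have d2: "int p ^ a dvd int k ^ n - 1" using kn1 by (metis int_dvd_int_iff of_nat_1 of_nat_diff of_nat_power)
    have "int p ^ a dvd int k - 1" using keyA[OF pr nd d1 d2 a1] .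
    then have "p ^ a dvd k - 1" using k1 by (metis int_dvd_int_iff of_nat_1 of_nat_diff of_nat_power)
    then show ?thesis using k1 by (simp add: cong_altdef_nat)
  qed
  define N where "N = p ^ (a - 1)"
  define f where "f i = x [^]\<^bsub>P\<^esub> (1 + p * i)" for i
  have cop: "coprime (1 + p * i) (p ^ a)" for i
  proof -
    have "gcd p (i * p + 1) = gcd p 1" by (rule gcd_add_mult)
    then have "coprime p (i * p + 1)" by (simp add: coprime_iff_gcd_eq_1)
    then have "coprime (1 + p * i) p" by (simp add: ac_simps coprime_commute)
    then show ?thesis by simp
  qed
  have fG: "f i \<in> {x \<in> carrier P. P.ord x = p ^ a}" for i
  proof -
    have "P.ord (x [^]\<^bsub>P\<^esub> (1 + p * i)) = P.ord x"
      using iffD2[OF P.pow_ord_eq_ord_iff[OF assms(3) xc, of "1 + p * i"]] cop[of i] ordx by simp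
    then have "P.ord (f i) = p ^ a" unfolding f_def using ordx by simp
    moreover have "f i \<in> carrier P" unfolding f_def using xc by (rule P.nat_pow_closed)
    ultimately show ?thesis by blast
  qed
  have inj: "inj_on (\<lambda>i. orbit G \<phi> (f i)) {..<N}"
  proof (rule inj_onI)
    fix i j assume i: "i \<in> {..<N}" and j: "j \<in> {..<N}" and eq: "orbit G \<phi> (f i) = orbit G \<phi> (f j)"
    have "f j \<in> orbit G \<phi> (f j)" unfolding orbit_def using fG[of j] one_act[of "f j"] by force
    then have "f j \<in> orbit G \<phi> (f i)" using eq by simp
    then obtain g where g: "g \<in> carrier G" "\<phi> g (f i) = f j" unfolding orbit_def by force
    obtain u where u: "[(1 + p * i) * u = 1] (mod p ^ a)" using cong_solve_coprime_nat[OF cop[of i]] by auto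
    have "x = x [^]\<^bsub>P\<^esub> (1::nat)" using xc by simp
    also have "\<dots> = x [^]\<^bsub>P\<^esub> ((1 + p * i) * u)"
      using pow_cong_eq[OF P.is_group xc] u ordx by (metis cong_sym)
    also have "\<dots> = (f i) [^]\<^bsub>P\<^esub> u" unfolding f_def P.nat_pow_pow[OF xc] by (rule refl)
    finally have xf: "x = (f i) [^]\<^bsub>P\<^esub> u" .
    have fic: "f i \<in> carrier P" using fG by blast
    have "\<phi> g x = (\<phi> g (f i)) [^]\<^bsub>P\<^esub> u"
      using xf g assms(10) fic by (simp add: hom_nat_pow[OF _ _ P.is_group P.is_group])
    also have "\<dots> = x [^]\<^bsub>P\<^esub> ((1 + p * j) * u)" unfolding g(2) unfolding f_def P.nat_pow_pow[OF xc] by (rule refl)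
    finally have gx: "\<phi> g x = x [^]\<^bsub>P\<^esub> ((1 + p * j) * u)" .
    have pa: "p dvd p ^ a" using a1 by (simp add: dvd_power)
    have ci: "[1 + p * i = 1] (mod p)" for i unfolding cong_def by (rule mod_mult_self2)
    have "[(1 + p * i) * u = 1] (mod p)" using u pa cong_dvd_modulus_nat by blast
    moreover have "[(1 + p * i) * u = 1 * u] (mod p)" using ci cong_mult cong_refl by blast
    ultimately have u1: "[u = 1] (mod p)" by (metis cong_sym cong_trans mult_1)
    have "[(1 + p * j) * u = 1 * 1] (mod p)" using ci u1 cong_mult by blast
    then have k1: "[(1 + p * j) * u = 1] (mod p ^ a)" using key[OF g(1) xc ordx gx] by simp
    have "[(1 + p * i) * ((1 + p * j) * u) = (1 + p * i) * 1] (mod p ^ a)"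
      using k1 cong_mult cong_refl by blast
    moreover have "[(1 + p * j) * ((1 + p * i) * u) = (1 + p * j) * 1] (mod p ^ a)"
      using u cong_mult cong_refl by blast
    ultimately have "[1 + p * i = 1 + p * j] (mod p ^ a)"
      by (metis (no_types, lifting) cong_sym cong_trans mult.left_commute mult_1_right)
    then have "[p * i = p * j] (mod p ^ a)" by (rule iffD1[OF cong_add_lcancel_nat])
    moreover have "p ^ a = p * N" unfolding N_def using a1 by (cases a) simp_all
    ultimately have "(p * i) mod (p * N) = (p * j) mod (p * N)" by (simp add: cong_def)
    then have "p * (i mod N) = p * (j mod N)" by (simp only: mult_mod_right)
    then have "i mod N = j mod N" using p1 by simp
    then show "i = j" using i j by simp
  qed
  have sub: "(\<lambda>i. orbit G \<phi> (f i)) ` {..<N} \<subseteq> orbits G {x \<in> carrier P. P.ord x = p ^ a} \<phi>"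
    unfolding orbits_def using fG by blast
  have fin: "finite (orbits G {x \<in> carrier P. P.ord x = p ^ a} \<phi>)"
  proof -
    have "orbits G {x \<in> carrier P. P.ord x = p ^ a} \<phi> = orbit G \<phi> ` {x \<in> carrier P. P.ord x = p ^ a}"
      unfolding orbits_def by blast
    then show ?thesis using assms(3) by simp
  qed
  have "N = card ((\<lambda>i. orbit G \<phi> (f i)) ` {..<N})" using inj by (simp add: card_image)
  also have "\<dots> \<le> card (orbits G {x \<in> carrier P. P.ord x = p ^ a} \<phi>)" using card_mono[OF fin sub] .
  finally show ?thesis unfolding N_def .
qed

end
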